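(* Let $1<a_1<a_2$ be coprime integers. There exists $T$ such that for all $t\in(T,\infty)$, $|P(t)|=|\mu_t'(r_0(t))|>\frac{1}{a_2}$. Consequently, the set $\mathcal{T}=\{t\in(1,\infty): |P(t)|>\frac{1}{a_2},\ r_0(t)\in\mathbb{Q}\}$ is dense in some ray $(T,\infty)$ (i.e. $(T,\infty)$ is contained in the closure of $\mathcal{T}$).
   Context: For $t\in[1,\infty)$ and $(u,v)\in\mathbb{R}^2$, $\|(u,v)\|_t=(|u|^t+|v|^t)^{1/t}$. Define $\mu_t(r)=\left\|\left(\frac{1-r}{a_1},\frac{r}{a_2}\right)\right\|_t$ for $r\in[0,1]$, $r_0(t)=\min\{r\in[0,1]:\mu_t(r)=\frac{1}{a_2}\}$, and $P(t)=\mu_t'(r_0(t))$ (derivative in $r$). *)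

theory Defs
  imports "HOL-Analysis.Analysis"
begin

definition tnorm :: "real \<Rightarrow> real \<Rightarrow> real \<Rightarrow> real" where
  "tnorm t u v = (\<bar>u\<bar> powr t + \<bar>v\<bar> powr t) powr (1 / t)"

definition mu :: "int \<Rightarrow> int \<Rightarrow> real \<Rightarrow> real \<Rightarrow> real" where
  "mu a1 a2 t r = tnorm t ((1 - r) / real_of_int a1) (r / real_of_int a2)"

definition r0 :: "int \<Rightarrow> int \<Rightarrow> real \<Rightarrow> real" where
  "r0 a1 a2 t = (LEAST r. r \<in> {0..1} \<and> mu a1 a2 t r = 1 / real_of_int a2)"

definition P :: "int \<Rightarrow> int \<Rightarrow> real \<Rightarrow> real" where
  "P a1 a2 t = deriv (mu a1 a2 t) (r0 a1 a2 t)"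

end

theory Submission
  imports Defs
begin

definition Gf :: "real \<Rightarrow> real \<Rightarrow> real \<Rightarrow> real \<Rightarrow> real" where
  "Gf a b t r = (b * (1 - r) / a) powr t + r powr t"

definition Gd :: "real \<Rightarrow> real \<Rightarrow> real \<Rightarrow> real \<Rightarrow> real" where
  "Gd a b t r = t * (b * (1 - r) / a) powr (t - 1) * (- (b / a)) + t * r powr (t - 1)"

lemma G_deriv:
  assumes "0 < a" "0 < b" "0 < r" "r < 1"
  shows "(Gf a b t has_real_derivative Gd a b t r) (at r)"
proof -
  have pos: "b * (1 - r) / a > 0" using assms by simp
  have l: "((\<lambda>r. b * (1 - r) / a) has_real_derivative (- (b / a))) (at r)"
    by (rule derivative_eq_intros refl | use assms in \<open>simp add: field_simps\<close>)+
  have h1: "((\<lambda>r. (b * (1 - r) / a) powr t) has_real_derivative t * (b * (1 - r) / a) powr (t - 1) * (- (b / a))) (at r)"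
    using DERIV_fun_powr[OF l pos, of t] by simp
  have h2: "((\<lambda>r. r powr t) has_real_derivative t * r powr (t - 1)) (at r)"
    using has_real_derivative_powr[of r t] assms by simp
  show ?thesis unfolding Gf_def[abs_def] Gd_def
    using DERIV_add[OF h1 h2] by simp
qed

lemma G_cont:
  assumes "0 < a" "0 < b" "0 < t"
  shows "continuous_on {0..1} (Gf a b t)"
  unfolding Gf_def[abs_def] using assms
  by (intro continuous_intros continuous_on_powr') (auto simp: field_simps)

lemma Gd_mono:
  assumes "0 < a" "0 < b" "1 < t" "0 < x" "x < y" "y < 1"
  shows "Gd a b t x < Gd a b t y"
proof -
  have "b * (1 - y) / a < b * (1 - x) / a" using assms by (simp add: divide_strict_right_mono)
  moreover have "0 \<le> b * (1 - y) / a" using assms by simp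
  ultimately have 1: "(b * (1 - y) / a) powr (t - 1) < (b * (1 - x) / a) powr (t - 1)"
    using assms by (intro powr_less_mono2) auto
  have 2: "x powr (t - 1) < y powr (t - 1)" using assms by (intro powr_less_mono2) auto
  have "t * (b / a) * (b * (1 - y) / a) powr (t - 1) < t * (b / a) * (b * (1 - x) / a) powr (t - 1)"
    using mult_strict_left_mono[OF 1, of "t*(b/a)"] assms by simp
  moreover have "t * x powr (t - 1) < t * y powr (t - 1)" using 2 assms by simp
  ultimately show ?thesis unfolding Gd_def by (simp add: algebra_simps)
qed

lemma G_slope:
  assumes "0 < a" "0 < b" "1 < t" "0 \<le> x" "x < y" "y < z" "z \<le> 1"
  shows "(Gf a b t y - Gf a b t x) / (y - x) < (Gf a b t z - Gf a b t y) / (z - y)"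
proof -
  have c: "continuous_on {0..1} (Gf a b t)" using G_cont assms by simp
  have d: "Gf a b t differentiable at u" if "0 < u" "u < 1" for u
    using G_deriv[OF assms(1,2) that] real_differentiable_def by blast
  have cxy: "continuous_on {x..y} (Gf a b t)" "continuous_on {y..z} (Gf a b t)"
    using continuous_on_subset[OF c] assms by auto
  have dxy: "\<And>u. x < u \<Longrightarrow> u < y \<Longrightarrow> Gf a b t differentiable at u"
    "\<And>u. y < u \<Longrightarrow> u < z \<Longrightarrow> Gf a b t differentiable at u"
    using d assms by auto
  obtain l1 z1 where z1: "x < z1" "z1 < y" "(Gf a b t has_real_derivative l1) (at z1)"
      "Gf a b t y - Gf a b t x = (y - x) * l1"
    using MVT[OF \<open>x < y\<close> cxy(1) dxy(1)] by blast
  obtain l2 z2 where z2: "y < z2" "z2 < z" "(Gf a b t has_real_derivative l2) (at z2)"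
      "Gf a b t z - Gf a b t y = (z - y) * l2"
    using MVT[OF \<open>y < z\<close> cxy(2) dxy(2)] by blast
  have "l1 = Gd a b t z1" using DERIV_unique[OF z1(3) G_deriv] assms z1 z2 by simp
  moreover have "l2 = Gd a b t z2" using DERIV_unique[OF z2(3) G_deriv] assms z1 z2 by simp
  moreover have "Gd a b t z1 < Gd a b t z2" using Gd_mono assms z1 z2 by simp
  ultimately show ?thesis using z1 z2 assms by simp
qed


lemma lim0: fixes \<rho>::real assumes "0<\<rho>" "\<rho><1" shows "((\<lambda>t. \<rho> powr t) \<longlongrightarrow> 0) at_top"
proof -
  have "ln \<rho> < 0" using assms by simp
  then have "filterlim (\<lambda>t. ln \<rho> * t) at_bot at_top"
    by (rule filterlim_tendsto_neg_mult_at_bot[OF tendsto_const _ filterlim_ident])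
  then have "((\<lambda>t. exp (ln \<rho> * t)) \<longlongrightarrow> 0) at_top"
    using exp_at_bot filterlim_compose by blast
  then show ?thesis using assms by (simp add: powr_def mult.commute)
qed

lemma mu_G:
  assumes "0 < A1" "0 < A2" "0 < t" "0 \<le> r" "r \<le> 1"
  shows "mu A1 A2 t r = Gf (real_of_int A1) (real_of_int A2) t r powr (1 / t) / real_of_int A2"
proof -
  define a where "a = real_of_int A1"
  define b where "b = real_of_int A2"
  have ab: "0 < a" "0 < b" using assms by (auto simp: a_def b_def)
  have e1: "\<bar>(1 - r) / a\<bar> powr t = (b * (1 - r) / a) powr t * (1 / b) powr t"
  proof -
    have eq: "\<bar>(1 - r) / a\<bar> = (b * (1 - r) / a) * (1 / b)" using ab assms by simp
    show ?thesis by (subst eq) (rule powr_mult)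
  qed
  have e2: "\<bar>r / b\<bar> powr t = r powr t * (1 / b) powr t"
  proof -
    have eq: "\<bar>r / b\<bar> = r * (1 / b)" using ab assms by simp
    show ?thesis by (subst eq) (rule powr_mult)
  qed
  have "mu A1 A2 t r = (Gf a b t r * (1 / b) powr t) powr (1 / t)"
    unfolding mu_def tnorm_def Gf_def a_def[symmetric] b_def[symmetric] e1 e2
    by (simp add: algebra_simps)
  also have "\<dots> = Gf a b t r powr (1 / t) * ((1 / b) powr t) powr (1 / t)"
    by (simp add: powr_mult)
  also have "((1 / b) powr t) powr (1 / t) = 1 / b"
    using ab assms by (simp add: powr_powr)
  finally show ?thesis by (simp add: a_def b_def)
qed

lemma G_nonneg: "0 \<le> Gf a b t r"
  unfolding Gf_def by simp

lemma root_iff: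
  assumes "0 < A1" "0 < A2" "0 < t" "0 \<le> r" "r \<le> 1"
  shows "mu A1 A2 t r = 1 / real_of_int A2 \<longleftrightarrow> Gf (real_of_int A1) (real_of_int A2) t r = 1"
proof -
  define g where "g = Gf (real_of_int A1) (real_of_int A2) t r"
  have g0: "0 \<le> g" unfolding g_def by (rule G_nonneg)
  have "mu A1 A2 t r = 1 / real_of_int A2 \<longleftrightarrow> g powr (1 / t) = 1"
    using mu_G[OF assms] assms unfolding g_def by (auto simp: field_simps)
  also have "\<dots> \<longleftrightarrow> g = 1"
  proof
    assume "g powr (1 / t) = 1"
    then have "(g powr (1 / t)) powr t = 1" by simp
    then show "g = 1" using g0 assms by (simp add: powr_powr)
  qed simp
  finally show ?thesis unfolding g_def .
qed

lemma G_zero: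
  assumes "0 < a" "a < b" "0 < t"
  shows "Gf a b t 0 > 1"
proof -
  have "1 powr t < (b / a) powr t" using assms by (intro powr_less_mono2) auto
  then show ?thesis unfolding Gf_def by simp
qed

lemma G_one: "Gf a b t 1 = 1"
  unfolding Gf_def by simp

lemma r0_char:
  assumes "0 < A1" "real_of_int A1 < real_of_int A2" "1 < t" "0 < r" "r < 1"
    and "Gf (real_of_int A1) (real_of_int A2) t r = 1"
  shows "r0 A1 A2 t = r"
  unfolding r0_def
proof (rule Least_equality)
  have A2: "0 < A2" using assms by simp
  show "r \<in> {0..1} \<and> mu A1 A2 t r = 1 / real_of_int A2"
    using root_iff[OF assms(1) A2, of t r] assms by auto
  fix y assume y: "y \<in> {0..1} \<and> mu A1 A2 t y = 1 / real_of_int A2"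
  then have gy: "Gf (real_of_int A1) (real_of_int A2) t y = 1"
    using root_iff[OF assms(1) A2, of t y] assms by auto
  show "r \<le> y"
  proof (rule ccontr)
    assume "\<not> r \<le> y"
    then have "y < r" by simp
    from G_slope[of "real_of_int A1" "real_of_int A2" t y r 1] this y assms gy G_one
    show False by simp
  qed
qed

lemma G_above:
  assumes "0 < a" "0 < b" "1 < t" "0 \<le> q" "q < r" "r < 1" "Gf a b t r = 1"
  shows "Gf a b t q > 1"
proof -
  have "(Gf a b t r - Gf a b t q) / (r - q) < (Gf a b t 1 - Gf a b t r) / (1 - r)"
    using G_slope[of a b t q r 1] assms by simp
  then have "(1 - Gf a b t q) / (r - q) < 0" using assms G_one by simp
  then show ?thesis using assms by (simp add: divide_less_0_iff)
qed

lemma G_below: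
  assumes "0 < a" "0 < b" "1 < t" "0 \<le> r" "r < q" "q < 1" "Gf a b t r = 1"
  shows "Gf a b t q < 1"
proof (rule ccontr)
  assume "\<not> Gf a b t q < 1"
  then have h: "Gf a b t q \<ge> 1" by simp
  have "(Gf a b t q - Gf a b t r) / (q - r) < (Gf a b t 1 - Gf a b t q) / (1 - q)"
    using G_slope[of a b t r q 1] assms by simp
  moreover have "(Gf a b t q - Gf a b t r) / (q - r) \<ge> 0" using h assms by simp
  moreover have "(Gf a b t 1 - Gf a b t q) / (1 - q) \<le> 0" using h assms G_one
    by (simp add: divide_nonpos_pos)
  ultimately show False by simp
qed

lemma G_t_decr:
  assumes "0 < a" "0 < b" "0 < t" "t < t'" "0 < r" "r < 1" "Gf a b t r = 1"
  shows "Gf a b t' r < 1"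
proof -
  define s where "s = b * (1 - r) / a"
  have s0: "0 < s" using assms by (simp add: s_def)
  have rt: "0 < r powr t" using assms by simp
  have "s powr t + r powr t = 1" using assms(7) unfolding Gf_def s_def[symmetric] .
  then have st: "s powr t < 1" using rt by linarith
  have s1: "s < 1"
  proof (rule ccontr)
    assume "\<not> s < 1"
    then have "1 powr t \<le> s powr t" using assms by (intro powr_mono2) auto
    then show False using st by simp
  qed
  have "s powr t' < s powr t" using s0 s1 assms by (intro powr_less_mono') auto
  moreover have "r powr t' < r powr t" using assms by (intro powr_less_mono') auto
  ultimately show ?thesis using assms unfolding Gf_def s_def[symmetric] by simp
qed


lemma P_val:
  assumes "0 < A1" "real_of_int A1 < real_of_int A2" "1 < t" "0 < r" "r < 1"
    and "Gf (real_of_int A1) (real_of_int A2) t r = 1"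
  shows "P A1 A2 t = Gd (real_of_int A1) (real_of_int A2) t r / (t * real_of_int A2)"
proof -
  define a where "a = real_of_int A1"
  define b where "b = real_of_int A2"
  have A2: "0 < A2" using assms by simp
  have ab: "0 < a" "0 < b" using assms A2 by (auto simp: a_def b_def)
  have g1: "Gf a b t r = 1" using assms(6) by (simp add: a_def b_def)
  have d1: "((\<lambda>x. Gf a b t x powr (1 / t)) has_real_derivative
      1 / t * Gf a b t r powr (1 / t - of_nat 1) * Gd a b t r) (at r)"
  proof -
    have gd: "(Gf a b t has_real_derivative Gd a b t r) (at r)" using G_deriv ab assms by simp
    show ?thesis using DERIV_fun_powr[OF gd, of "1 / t"] g1 by simp
  qed
  have d2: "((\<lambda>x. Gf a b t x powr (1 / t) / b) has_real_derivative
      Gd a b t r / (t * b)) (at r)"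
    using DERIV_cdivide[OF d1, of b] g1 by simp
  have d3: "(mu A1 A2 t has_real_derivative Gd a b t r / (t * b)) (at r)"
  proof (rule has_field_derivative_transform_within_open[OF d2, of "{0<..<1}"])
    show "open {0<..<(1::real)}" by simp
    show "r \<in> {0<..<1}" using assms by simp
    fix x :: real assume "x \<in> {0<..<1}"
    then show "Gf a b t x powr (1 / t) / b = mu A1 A2 t x"
      using mu_G[OF assms(1) A2, of t x] assms by (simp add: a_def b_def)
  qed
  have "r0 A1 A2 t = r" using r0_char[OF assms] .
  then show ?thesis unfolding P_def using DERIV_imp_deriv[OF d3] by (simp add: a_def b_def)
qed

lemma P_bound:
  assumes "0 < a" "a < b" "1 < t" "0 < r" "r \<le> \<rho>" "\<rho> < 1" "Gf a b t r = 1"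
    and E2: "(1 - \<rho> powr t) / a - (\<rho> powr t / \<rho>) / b > 1 / b"
  shows "\<bar>Gd a b t r / (t * b)\<bar> > 1 / b"
proof -
  define s where "s = b * (1 - r) / a"
  have s0: "0 < s" using assms by (simp add: s_def)
  have sr: "s powr t + r powr t = 1" using assms(7) unfolding Gf_def s_def[symmetric] .
  have s1: "s \<le> 1"
  proof (rule ccontr)
    assume "\<not> s \<le> 1"
    then have "1 powr t < s powr t" using assms by (intro powr_less_mono2) auto
    moreover have "0 \<le> r powr t" by simp
    ultimately show False using sr by simp
  qed
  have val: "Gd a b t r / (t * b) = - (s powr (t - 1)) / a + r powr (t - 1) / b"
    unfolding Gd_def s_def[symmetric] using assms by (simp add: field_simps)
  have "s powr t \<le> s powr (t - 1)" using s0 s1 by (intro powr_mono') auto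
  moreover have "r powr t \<le> \<rho> powr t" using assms by (intro powr_mono2) auto
  moreover have "r powr (t - 1) \<le> \<rho> powr (t - 1)" using assms by (intro powr_mono2) auto
  moreover have "\<rho> powr (t - 1) = \<rho> powr t / \<rho>" using assms by (simp add: powr_diff)
  ultimately have "s powr (t - 1) \<ge> 1 - \<rho> powr t" "r powr (t - 1) \<le> \<rho> powr t / \<rho>"
    using sr by auto
  then have "s powr (t - 1) / a \<ge> (1 - \<rho> powr t) / a" "r powr (t - 1) / b \<le> (\<rho> powr t / \<rho>) / b"
    using assms by (intro divide_right_mono; simp)+
  then have "Gd a b t r / (t * b) < - (1 / b)" using val E2 by linarith
  then have "1 / b < - (Gd a b t r / (t * b))" by linarith
  also have "\<dots> \<le> \<bar>Gd a b t r / (t * b)\<bar>" by (rule abs_ge_minus_self)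
  finally show ?thesis .
qed


theorem proposition4:
  fixes a1 a2 :: int
  assumes "1 < a1" and "a1 < a2" and "coprime a1 a2"
  shows "\<exists>T\<ge>1. (\<forall>t>T. \<bar>P a1 a2 t\<bar> > 1 / real_of_int a2) \<and>
           {T<..} \<subseteq> closure {t \<in> {1<..}. \<bar>P a1 a2 t\<bar> > 1 / real_of_int a2 \<and> r0 a1 a2 t \<in> \<rat>}"
proof -
  define a where "a = real_of_int a1"
  define b where "b = real_of_int a2"
  have a1pos: "0 < a1" using assms by simp
  have ab: "0 < a" "a < b" using assms by (auto simp: a_def b_def)
  have b0: "0 < b" using ab by simp
  define \<rho> where "\<rho> = 1 - a / (2 * b)"
  have \<rho>: "0 < \<rho>" "\<rho> < 1" using ab by (auto simp: \<rho>_def field_simps)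
  have s\<rho>: "b * (1 - \<rho>) / a = 1 / 2" using ab by (simp add: \<rho>_def field_simps)
  have L1: "((\<lambda>t. (1/2::real) powr t + \<rho> powr t) \<longlongrightarrow> 0 + 0) at_top"
    by (intro tendsto_add lim0 \<rho>) auto
  have L2: "((\<lambda>t. (1 - \<rho> powr t) / a - (\<rho> powr t / \<rho>) / b) \<longlongrightarrow> (1 - 0) / a - (0 / \<rho>) / b) at_top"
    by (intro tendsto_intros lim0 \<rho>) (use ab \<rho> in auto)
  have ev: "eventually (\<lambda>t. (1/2::real) powr t + \<rho> powr t < 1 \<and>
      (1 - \<rho> powr t) / a - (\<rho> powr t / \<rho>) / b > 1 / b) at_top"
  proof (rule eventually_conj)
    show "eventually (\<lambda>t. (1/2::real) powr t + \<rho> powr t < 1) at_top"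
      using order_tendstoD(2)[OF L1, of 1] by simp
    have "1 / b < (1 - 0) / a - (0 / \<rho>) / b" using ab by (simp add: frac_less2)
    then show "eventually (\<lambda>t. (1 - \<rho> powr t) / a - (\<rho> powr t / \<rho>) / b > 1 / b) at_top"
      using order_tendstoD(1)[OF L2] by blast
  qed
  then obtain N where N: "\<And>t. t \<ge> N \<Longrightarrow> (1/2::real) powr t + \<rho> powr t < 1 \<and>
      (1 - \<rho> powr t) / a - (\<rho> powr t / \<rho>) / b > 1 / b"
    unfolding eventually_at_top_linorder by blast
  define T where "T = max 1 N"
  have K: "\<exists>r. 0 < r \<and> r < 1 \<and> Gf a b t r = 1 \<and> r0 a1 a2 t = r \<and> \<bar>P a1 a2 t\<bar> > 1 / b"
    if t: "t > T" for t
  proof -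
    have t1: "1 < t" "N \<le> t" using t by (auto simp: T_def)
    note Nt = N[OF t1(2)]
    have G\<rho>: "Gf a b t \<rho> < 1" using Nt unfolding Gf_def s\<rho> by simp
    have G0: "Gf a b t 0 > 1" using G_zero ab t1 by simp
    have "continuous_on {0..\<rho>} (Gf a b t)"
      using continuous_on_subset[OF G_cont[OF ab(1) b0, of t]] \<rho> t1 by auto
    then obtain r where r: "0 \<le> r" "r \<le> \<rho>" "Gf a b t r = 1"
      using IVT2'[of "Gf a b t" \<rho> 1 0] G\<rho> G0 \<rho> by force
    have r0': "0 < r" using r G0 by (cases "r = 0") auto
    have rr: "r0 a1 a2 t = r"
      using r0_char[of a1 a2 t r] a1pos ab t1 r r0' \<rho> by (simp add: a_def b_def)
    have "P a1 a2 t = Gd a b t r / (t * b)"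
      using P_val[of a1 a2 t r] a1pos ab t1 r r0' \<rho> by (simp add: a_def b_def)
    moreover have "\<bar>Gd a b t r / (t * b)\<bar> > 1 / b"
      using P_bound[of a b t r \<rho>] ab t1 r r0' \<rho> Nt by simp
    ultimately show ?thesis using r r0' rr \<rho> by auto
  qed
  show ?thesis
  proof (intro exI[of _ T] conjI allI impI)
    show "1 \<le> T" by (simp add: T_def)
    fix t assume "T < t"
    then show "\<bar>P a1 a2 t\<bar> > 1 / real_of_int a2" using K b_def by blast
  next
    show "{T<..} \<subseteq> closure {t \<in> {1<..}. \<bar>P a1 a2 t\<bar> > 1 / real_of_int a2 \<and> r0 a1 a2 t \<in> \<rat>}"
    proof
      fix t0 assume "t0 \<in> {T<..}"
      then have t0: "T < t0" by simp
      show "t0 \<in> closure {t \<in> {1<..}. \<bar>P a1 a2 t\<bar> > 1 / real_of_int a2 \<and> r0 a1 a2 t \<in> \<rat>}"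
        unfolding closure_approachable
      proof (intro allI impI)
        fix e :: real assume e: "0 < e"
        define t1 where "t1 = t0 + e / 2"
        have t01: "t0 < t1" "T < t1" using e t0 by (auto simp: t1_def)
        have T1: "1 \<le> T" by (simp add: T_def)
        obtain ra where ra: "0 < ra" "ra < 1" "Gf a b t0 ra = 1" "r0 a1 a2 t0 = ra"
          using K[OF t0] by blast
        obtain rb where rb: "0 < rb" "rb < 1" "Gf a b t1 rb = 1" "r0 a1 a2 t1 = rb"
          using K[OF t01(2)] by blast
        have "Gf a b t1 ra < 1" using G_t_decr[of a b t0 t1 ra] ab b0 ra t01 t0 T1 by simp
        have rba: "rb < ra"
        proof (rule ccontr)
          assume "\<not> rb < ra"
          then have "ra < rb \<or> ra = rb" by auto
          then show False
          proof
            assume "ra < rb"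
            then have "Gf a b t1 ra > 1" using G_above[of a b t1 ra rb] ab b0 ra rb t01 T1 by simp
            then show False using \<open>Gf a b t1 ra < 1\<close> by simp
          next
            assume "ra = rb"
            then show False using \<open>Gf a b t1 ra < 1\<close> rb by simp
          qed
        qed
        obtain q where q: "q \<in> \<rat>" "rb < q" "q < ra" using Rats_dense_in_real[OF rba] by blast
        have gq0: "Gf a b t0 q > 1" using G_above[of a b t0 q ra] ab b0 ra q rb t0 T1 by simp
        have gq1: "Gf a b t1 q < 1" using G_below[of a b t1 rb q] ab b0 ra q rb t01 T1 by simp
        have "continuous_on {t0..t1} (\<lambda>t. Gf a b t q)"
          unfolding Gf_def using ab b0 q ra rb by (intro continuous_intros) auto
        then obtain t' where t': "t0 \<le> t'" "t' \<le> t1" "Gf a b t' q = 1"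
          using IVT2'[of "\<lambda>t. Gf a b t q" t1 1 t0] gq0 gq1 t01 by force
        have t'T: "T < t'" using t' t0 by simp
        obtain r' where r': "0 < r'" "r' < 1" "Gf a b t' r' = 1" "r0 a1 a2 t' = r'"
            "\<bar>P a1 a2 t'\<bar> > 1 / b"
          using K[OF t'T] by blast
        have "r0 a1 a2 t' = q"
          using r0_char[of a1 a2 t' q] a1pos ab t' t'T T1 q ra rb by (simp add: a_def b_def)
        then have mem: "t' \<in> {t \<in> {1<..}. \<bar>P a1 a2 t\<bar> > 1 / real_of_int a2 \<and> r0 a1 a2 t \<in> \<rat>}"
          using r' q t'T T1 by (simp add: b_def)
        have "dist t' t0 < e" using t' e by (simp add: t1_def dist_real_def)
        then show "\<exists>y\<in>{t \<in> {1<..}. \<bar>P a1 a2 t\<bar> > 1 / real_of_int a2 \<and> r0 a1 a2 t \<in> \<rat>}. dist y t0 < e"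
          using mem by blast
      qed
    qed
  qed
qed

end
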